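(* Let $n\ge 2$, let $K\subset\mathbb{R}^n$ be a convex body of constant width $\Theta$, and let $\gamma\subset\mathbb{R}^n$ be any curve such that $K\subset\operatorname{co}(\gamma)$. Then $$ \operatorname{length}(\gamma)\ge \frac{2(\pi-1)\,\Gamma\!\left(\frac{n+1}{2}\right)}{\sqrt{\pi}\,\Gamma\!\left(\frac{n}{2}\right)}\cdot\Theta, $$ where $\Gamma$ is the gamma function.
   Context: $\mathbb{R}^n$ carries the standard Euclidean metric $d$. A convex body is any nonempty compact convex subset of $\mathbb{R}^n$. $\operatorname{co}(A)$ denotes the convex hull of $A$. The support function of $K$ is $h(K,u)=\sup\{(x,u):x\in K\}$ and the width function is $w(K,u)=h(K,u)+h(K,-u)$ for $u$ in the unit sphere $S^{n-1}$; $K$ has constant width $\Theta$ if $w(K,u)=\Theta$ for all $u\in S^{n-1}$. A curve is the image of a continuous map $\varphi:[a,b]\to\mathbb{R}^n$; its length is $\operatorname{length}(\gamma)=\sup\sum_{i=1}^m d(\varphi(t_{i-1}),\varphi(t_i))$ over all partitions $a=t_0<\dots<t_m=b$ (possibly $+\infty$). *)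

theory Defs
  imports "HOL-Analysis.Analysis"
begin

definition convex_body :: "'a::euclidean_space set \<Rightarrow> bool" where
  "convex_body K \<longleftrightarrow> K \<noteq> {} \<and> compact K \<and> convex K"

definition support_fun :: "'a::euclidean_space set \<Rightarrow> 'a \<Rightarrow> real" where
  "support_fun K u = (SUP x\<in>K. x \<bullet> u)"

definition width_fun :: "'a::euclidean_space set \<Rightarrow> 'a \<Rightarrow> real" where
  "width_fun K u = support_fun K u + support_fun K (- u)"

definition constant_width :: "'a::euclidean_space set \<Rightarrow> real \<Rightarrow> bool" where
  "constant_width K \<Theta> \<longleftrightarrow> (\<forall>u. norm u = 1 \<longrightarrow> width_fun K u = \<Theta>)"

definition curve_length :: "(real \<Rightarrow> 'a::euclidean_space) \<Rightarrow> real \<Rightarrow> real \<Rightarrow> ereal" where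
  "curve_length \<phi> a b =
     (SUP (m, t) \<in> {(m::nat, t::nat \<Rightarrow> real). 0 < m \<and> t 0 = a \<and> t m = b \<and> (\<forall>i<m. t i < t (Suc i))}.
        ereal (\<Sum>i=1..m. dist (\<phi> (t (i - 1))) (\<phi> (t i))))"

end

theory Submission
  imports Defs
begin


definition RG :: "nat \<Rightarrow> real" where "RG n = Gamma (real (n+1)/2) / Gamma (real n / 2)"

lemma Gamma_pos': "x > (0::real) \<Longrightarrow> Gamma x > 0"
  by (simp add: Gamma_real_pos_exp)

lemma Gamma_half_step: "x > (0::real) \<Longrightarrow> Gamma (x + 1) = x * Gamma x"
  by (rule Gamma_plus1) (auto elim!: nonpos_Ints_cases)

lemma RG_step: assumes "n \<ge> 1" shows "RG (n+2) = (real n + 1) / real n * RG n"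
proof -
  have a: "real (n+2+1)/2 = real (n+1)/2 + 1" by simp
  have b: "real (n+2)/2 = real n/2 + 1" by simp
  have p1: "real (n+1)/2 > 0" by simp
  have p2: "real n/2 > 0" using assms by simp
  have n1: "Gamma (real n / 2) \<noteq> 0" using Gamma_pos'[OF p2] by simp
  have n2: "real n \<noteq> 0" using assms by simp
  show ?thesis unfolding RG_def a b Gamma_half_step[OF p1] Gamma_half_step[OF p2]
    using n1 n2 by (simp add: field_simps)
qed

lemma RG2: "RG 2 = sqrt pi / 2"
proof -
  have "Gamma (3/2::real) = Gamma (1/2 + 1)" by simp
  also have "\<dots> = 1/2 * sqrt pi" by (subst Gamma_half_step) (auto simp: Gamma_one_half_real)
  finally show ?thesis unfolding RG_def by simp
qed

lemma RG3: "RG 3 = 2 / sqrt pi"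
proof -
  have "Gamma (3/2::real) = Gamma (1/2 + 1)" by simp
  also have "\<dots> = 1/2 * sqrt pi" by (subst Gamma_half_step) (auto simp: Gamma_one_half_real)
  finally have g: "Gamma (3/2::real) = sqrt pi / 2" by simp
  have G2: "Gamma (2::real) = 1" using Gamma_fact[of 1] by simp
  have "RG 3 = Gamma 2 / Gamma (3/2)" unfolding RG_def by simp
  also have "\<dots> = 1 / (sqrt pi / 2)" by (simp only: g G2)
  finally show ?thesis by simp
qed

lemma RG_bound_aux: "(RG (k+2))^2 \<le> 11/20 * real (k+2) - 11/40 \<and> (RG (k+3))^2 \<le> 11/20 * real (k+3) - 11/40"
proof (induction k)
  case 0
  have p: "pi \<le> 3.3" "pi \<ge> 2.91" using pi_approx by auto
  have e2: "(RG (0+2))^2 = pi/4" by (simp only: add_0 RG2) (simp add: power_divide)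
  have e3: "(RG (0+3))^2 = 4/pi" by (simp only: add_0 RG3) (simp add: power_divide)
  have "4/pi \<le> 4/2.91" using p by (intro divide_left_mono) auto
  then show ?case unfolding e2 e3 using p by simp
next
  case (Suc k)
  have "(RG (k+4))^2 \<le> 11/20 * real (k+4) - 11/40"
  proof -
    have e: "RG (k+4) = (real (k+2) + 1) / real (k+2) * RG (k+2)" using RG_step[of "k+2"] by (simp add: add.commute eval_nat_numeral)
    have "(RG (k+4))^2 = ((real k + 3) / (real k + 2))^2 * (RG (k+2))^2" unfolding e by (simp add: power_mult_distrib power_divide mult_ac add_ac)
    also have "\<dots> \<le> ((real k + 3) / (real k + 2))^2 * (11/20 * real (k+2) - 11/40)"
      using Suc.IH by (intro mult_left_mono) auto
    also have "\<dots> = (real k+3)^2*(22*real k+33)/(40*(real k+2)^2)" by (simp add: power_divide field_simps)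
    also have "\<dots> \<le> (22*real k + 77)*(real k+2)^2/(40*(real k+2)^2)"
    proof (rule divide_right_mono)
      show "(real k+3)^2*(22*real k+33) \<le> (22*real k + 77)*(real k+2)^2" by (simp add: power2_eq_square algebra_simps)
    qed simp
    also have "\<dots> = 11/20 * real (k+4) - 11/40" by (simp add: field_simps)
    finally show ?thesis .
  qed
  then show ?case using Suc.IH by (simp add: eval_nat_numeral)
qed

lemma RG_bound: "n \<ge> 2 \<Longrightarrow> (RG n)^2 \<le> 11/20 * real n - 11/40"
  using RG_bound_aux[of "n-2"] by (simp add: Suc_diff_Suc numeral_2_eq_2)

lemma coeff_bound: assumes "n \<ge> 2"
  shows "2 * (pi - 1) * Gamma (real (n + 1) / 2) / (sqrt pi * Gamma (real n / 2)) \<le> sqrt (4 * real n - 3)"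
proof -
  have c: "2 * (pi - 1) * Gamma (real (n + 1) / 2) / (sqrt pi * Gamma (real n / 2)) = 2 * (pi - 1) / sqrt pi * RG n"
    unfolding RG_def by simp
  have rpos: "RG n \<ge> 0" unfolding RG_def using assms Gamma_pos'[of "real (n+1)/2"] Gamma_pos'[of "real n/2"] by simp
  have pb: "pi \<le> 3.15" "pi \<ge> 3.14" using pi_approx by auto
  have "(2 * (pi - 1) / sqrt pi * RG n)^2 = 4 * (pi-1)^2 / pi * (RG n)^2"
    by (simp add: power_mult_distrib power_divide power2_eq_square algebra_simps)
  also have "\<dots> \<le> 4 * (pi-1)^2 / pi * (11/20 * real n - 11/40)"
    using RG_bound[OF assms] by (intro mult_left_mono) auto
  also have "\<dots> \<le> 4 * real n - 3"
  proof -
    have "(pi-1)^2/pi \<le> 2.15^2/3.14"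
      using pb by (intro frac_le power_mono) auto
    moreover have "11/20 * real n - 11/40 \<ge> 0" using assms by simp
    ultimately have "4 * (pi-1)^2 / pi * (11/20 * real n - 11/40) \<le> 4 * (2.15^2/3.14) * (11/20 * real n - 11/40)"
      by (intro mult_right_mono) auto
    also have "\<dots> \<le> 4 * real n - 3" using assms by (simp add: power2_eq_square)
    finally show ?thesis .
  qed
  finally have "(2 * (pi - 1) / sqrt pi * RG n)^2 \<le> 4 * real n - 3" .
  then have "2 * (pi - 1) / sqrt pi * RG n \<le> sqrt (4 * real n - 3)"
    using real_le_rsqrt by blast
  then show ?thesis using c by simp
qed




lemma path_seg: "i \<le> j \<Longrightarrow> \<bar>g j - g i\<bar> \<le> (\<Sum>k\<in>{i..<j}. \<bar>g (Suc k) - g k\<bar>)" for g :: "nat \<Rightarrow> real"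
proof (induction j)
  case 0 then show ?case by simp
next
  case (Suc j)
  show ?case
  proof (cases "i = Suc j")
    case True then show ?thesis by simp
  next
    case False
    then have ij: "i \<le> j" using Suc.prems by simp
    have "\<bar>g (Suc j) - g i\<bar> \<le> \<bar>g j - g i\<bar> + \<bar>g (Suc j) - g j\<bar>" by simp
    also have "\<dots> \<le> (\<Sum>k\<in>{i..<j}. \<bar>g (Suc k) - g k\<bar>) + \<bar>g (Suc j) - g j\<bar>" using Suc.IH[OF ij] by simp
    also have "\<dots> = (\<Sum>k\<in>{i..<Suc j}. \<bar>g (Suc k) - g k\<bar>)" using ij by simp
    finally show ?thesis .
  qed
qed

lemma tri3: "\<bar>x - w\<bar> \<le> \<bar>x - y\<bar> + \<bar>y - z\<bar> + \<bar>z - w\<bar>" for x y z w :: real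
  using abs_triangle_ineq[of "x-y" "y-z"] abs_triangle_ineq[of "x-z" "z-w"] by simp

lemma lin_aux: "T = X + Y + Z \<Longrightarrow> A \<le> X \<Longrightarrow> D \<le> Y \<Longrightarrow> C \<le> Z \<Longrightarrow> D \<le> A + E + C
   \<Longrightarrow> 0 \<le> A \<Longrightarrow> 0 \<le> C \<Longrightarrow> 0 \<le> E \<Longrightarrow> 2*D - E \<le> T \<and> D \<le> T" for T X Y Z A C D E :: real
  by (intro conjI; linarith)

lemma path_bound:
  fixes g :: "nat \<Rightarrow> real"
  assumes "i \<le> m" "j \<le> m"
  shows "(\<Sum>k<m. \<bar>g (Suc k) - g k\<bar>) \<ge> 2 * \<bar>g i - g j\<bar> - \<bar>g m - g 0\<bar>"
    and "(\<Sum>k<m. \<bar>g (Suc k) - g k\<bar>) \<ge> \<bar>g i - g j\<bar>"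
proof -
  define S where "S = (\<lambda>p q. (\<Sum>k\<in>{p..<q}. \<bar>g (Suc k) - g k\<bar>))"
  have tot: "(\<Sum>k<m. \<bar>g (Suc k) - g k\<bar>) = S 0 m" unfolding S_def by (simp add: atLeast0LessThan)
  have split: "S 0 m = S 0 p + S p q + S q m" if "p \<le> q" "q \<le> m" for p q
    unfolding S_def using that by (simp add: sum.atLeastLessThan_concat)
  have seg: "\<bar>g q - g p\<bar> \<le> S p q" if "p \<le> q" for p q unfolding S_def using path_seg[OF that] .
  have "(\<Sum>k<m. \<bar>g (Suc k) - g k\<bar>) \<ge> 2 * \<bar>g i - g j\<bar> - \<bar>g m - g 0\<bar> \<and> (\<Sum>k<m. \<bar>g (Suc k) - g k\<bar>) \<ge> \<bar>g i - g j\<bar>"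
  proof (cases "i \<le> j")
    case True
    have f1: "S 0 m = S 0 i + S i j + S j m" using split True assms by simp
    have f2: "\<bar>g i - g 0\<bar> \<le> S 0 i" using seg assms by simp
    have f3: "\<bar>g i - g j\<bar> \<le> S i j" using seg[of i j] True by (simp add: abs_minus_commute)
    have f4: "\<bar>g m - g j\<bar> \<le> S j m" using seg assms by simp
    have f5: "\<bar>g i - g j\<bar> \<le> \<bar>g i - g 0\<bar> + \<bar>g m - g 0\<bar> + \<bar>g m - g j\<bar>"
      using tri3[of "g i" "g 0" "g m" "g j"] by (simp add: abs_minus_commute)
    have "S 0 m \<ge> 2 * \<bar>g i - g j\<bar> - \<bar>g m - g 0\<bar> \<and> S 0 m \<ge> \<bar>g i - g j\<bar>"
      using lin_aux[OF f1 f2 f3 f4 f5] by simp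
    then show ?thesis unfolding tot .
  next
    case False
    have f1: "S 0 m = S 0 j + S j i + S i m" by (rule split) (use False assms in auto)
    have f2: "\<bar>g j - g 0\<bar> \<le> S 0 j" using seg assms by simp
    have f3: "\<bar>g i - g j\<bar> \<le> S j i" using seg[of j i] False by simp
    have f4: "\<bar>g m - g i\<bar> \<le> S i m" using seg assms by simp
    have f5: "\<bar>g i - g j\<bar> \<le> \<bar>g j - g 0\<bar> + \<bar>g m - g 0\<bar> + \<bar>g m - g i\<bar>"
      using tri3[of "g j" "g 0" "g m" "g i"] by (simp add: abs_minus_commute)
    have "S 0 m \<ge> 2 * \<bar>g i - g j\<bar> - \<bar>g m - g 0\<bar> \<and> S 0 m \<ge> \<bar>g i - g j\<bar>"
      using lin_aux[OF f1 f2 f3 f4 f5] by simp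
    then show ?thesis unfolding tot .
  qed
  then show "(\<Sum>k<m. \<bar>g (Suc k) - g k\<bar>) \<ge> 2 * \<bar>g i - g j\<bar> - \<bar>g m - g 0\<bar>"
    and "(\<Sum>k<m. \<bar>g (Suc k) - g k\<bar>) \<ge> \<bar>g i - g j\<bar>" by auto
qed



lemma bessel:
  fixes v :: "'a::euclidean_space"
  assumes "finite C" "pairwise orthogonal C" "\<And>c. c \<in> C \<Longrightarrow> norm c = 1"
  shows "(\<Sum>c\<in>C. (v \<bullet> c)^2) \<le> (norm v)^2"
proof -
  define z where "z = (\<Sum>c\<in>C. (v \<bullet> c) *\<^sub>R c)"
  have po: "pairwise (\<lambda>i j. orthogonal ((v \<bullet> i) *\<^sub>R i) ((v \<bullet> j) *\<^sub>R j)) C"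
    using assms(2) by (auto simp: pairwise_def orthogonal_clauses)
  have nz: "(norm z)^2 = (\<Sum>c\<in>C. (v \<bullet> c)^2)"
    unfolding z_def using norm_sum_Pythagorean[OF assms(1) po] assms(3) by (simp add: power_mult_distrib)
  have vz: "v \<bullet> z = (\<Sum>c\<in>C. (v \<bullet> c)^2)"
    unfolding z_def by (simp add: inner_sum_right power2_eq_square)
  have "(norm z)^2 \<le> norm v * norm z" using nz vz Cauchy_Schwarz_ineq2[of v z] by simp
  then have "norm z \<le> norm v"
    by (metis mult_right_le_imp_le norm_ge_zero power2_eq_square zero_less_norm_iff order_refl norm_zero mult_zero_left nle_le)
  then have "(norm z)^2 \<le> (norm v)^2" by (simp add: power_mono)
  then show ?thesis using nz by simp
qed

lemma poly_bound:
  fixes v :: "nat \<Rightarrow> 'a::euclidean_space"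
  assumes "finite C" "pairwise orthogonal C" "\<And>c. c \<in> C \<Longrightarrow> norm c = 1"
  shows "sqrt (\<Sum>c\<in>C. (\<Sum>i<m. \<bar>v i \<bullet> c\<bar>)^2) \<le> (\<Sum>i<m. norm (v i))"
proof -
  define y where "y = (\<lambda>i. \<Sum>c\<in>C. \<bar>v i \<bullet> c\<bar> *\<^sub>R c)"
  have po: "pairwise (\<lambda>i j. orthogonal (f i *\<^sub>R i) (f j *\<^sub>R j)) C" for f :: "'a \<Rightarrow> real"
    using assms(2) by (auto simp: pairwise_def orthogonal_clauses)
  have ny: "(norm (\<Sum>c\<in>C. f c *\<^sub>R c))^2 = (\<Sum>c\<in>C. (f c)^2)" for f :: "'a \<Rightarrow> real"
    using norm_sum_Pythagorean[OF assms(1) po[of f]] assms(3) by (simp add: power_mult_distrib)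
  have yi: "norm (y i) \<le> norm (v i)" for i
  proof -
    have "(norm (y i))^2 = (\<Sum>c\<in>C. (v i \<bullet> c)^2)" unfolding y_def ny by simp
    also have "\<dots> \<le> (norm (v i))^2" by (rule bessel[OF assms])
    finally show ?thesis using power2_le_imp_le by fastforce
  qed
  have "(\<Sum>i<m. y i) = (\<Sum>c\<in>C. (\<Sum>i<m. \<bar>v i \<bullet> c\<bar>) *\<^sub>R c)"
    unfolding y_def by (simp add: sum.swap[of _ C] scaleR_sum_left)
  then have "(norm (\<Sum>i<m. y i))^2 = (\<Sum>c\<in>C. (\<Sum>i<m. \<bar>v i \<bullet> c\<bar>)^2)"
    using ny[of "\<lambda>c. (\<Sum>i<m. \<bar>v i \<bullet> c\<bar>)"] by simp
  then have "sqrt (\<Sum>c\<in>C. (\<Sum>i<m. \<bar>v i \<bullet> c\<bar>)^2) = sqrt ((norm (\<Sum>i<m. y i))^2)" by simp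
  also have "\<dots> = norm (\<Sum>i<m. y i)" by simp
  also have "\<dots> \<le> (\<Sum>i<m. norm (y i))" by (rule norm_sum)
  also have "\<dots> \<le> (\<Sum>i<m. norm (v i))" by (intro sum_mono yi)
  finally show ?thesis .
qed



lemma partition_exists:
  fixes F :: "real set"
  assumes "finite F" "F \<subseteq> {a..b}" "a \<in> F" "b \<in> F" "a < b"
  shows "\<exists>m t. 0 < m \<and> t 0 = a \<and> t m = b \<and> (\<forall>i<m. t i < t (Suc i)) \<and> (\<forall>s\<in>F. \<exists>i\<le>m. t i = s)"
proof -
  obtain L where L: "sorted_wrt (<) L" "set L = F"
    using ex1_sorted_list_for_set_if_finite[OF assms(1)] by blast
  define m where "m = length L - 1"
  have len: "length L \<ge> 2"
  proof -
    have "card F \<ge> 2" using card_mono[OF assms(1), of "{a,b}"] assms by auto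
    moreover have "card F \<le> length L" using L(2) card_length by blast
    ultimately show ?thesis by simp
  qed
  have inF: "i < length L \<Longrightarrow> L ! i \<in> F" for i using L(2) nth_mem by blast
  have t0: "L ! 0 = a"
  proof -
    obtain k where k: "k < length L" "L ! k = a" using assms(3) L(2) by (auto simp: in_set_conv_nth)
    show ?thesis
    proof (cases "k = 0")
      case False
      have l0: "0 < length L" using len by linarith
      have "L ! 0 \<in> F" using l0 by (rule inF)
      then have "L ! 0 \<ge> a" using assms(2) by auto
      moreover have "L ! 0 < L ! k" using False sorted_wrt_nth_less[OF L(1), of 0 k] k by simp
      ultimately show ?thesis using k by simp
    qed (use k in simp)
  qed
  have tm: "L ! m = b"
  proof -
    obtain k where k: "k < length L" "L ! k = b" using assms(4) L(2) by (auto simp: in_set_conv_nth)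
    show ?thesis
    proof (cases "k = m")
      case False
      have lm: "m < length L" using len m_def by linarith
      have "L ! m \<in> F" using lm by (rule inF)
      then have "L ! m \<le> b" using assms(2) by auto
      moreover have "k < m" using False k m_def by linarith
      then have "L ! k < L ! m" using sorted_wrt_nth_less[OF L(1), of k m] lm by blast
      ultimately show ?thesis using k by simp
    qed (use k in simp)
  qed
  show ?thesis
  proof (rule exI[of _ m], rule exI[of _ "\<lambda>i. L ! i"], intro conjI ballI allI impI)
    show "0 < m" using len m_def by simp
    show "L ! 0 = a" by (rule t0)
    show "L ! m = b" by (rule tm)
    show "L ! i < L ! Suc i" if "i < m" for i using sorted_wrt_nth_less[OF L(1), of i "Suc i"] that m_def by simp
    show "\<exists>i\<le>m. L ! i = s" if sF: "s \<in> F" for s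
    proof -
      obtain i where "i < length L" "L ! i = s" using sF L(2) by (auto simp: in_set_conv_nth)
      moreover have "i \<le> m" using calculation(1) m_def by linarith
      ultimately show ?thesis by blast
    qed
  qed
qed




lemma l2: "2*D - E \<le> S \<Longrightarrow> T \<le> D \<Longrightarrow> E = E' \<Longrightarrow> P = S \<Longrightarrow> 2*T - E' \<le> P" for D E S T E' P :: real
  by linarith

lemma l3: "D \<le> S \<Longrightarrow> T \<le> D \<Longrightarrow> P = S \<Longrightarrow> T \<le> P" for D S T P :: real
  by linarith

theorem theorem3:
  fixes K :: "'a::euclidean_space set" and \<Theta> :: real
    and \<phi> :: "real \<Rightarrow> 'a" and a b :: real
  assumes "DIM('a) \<ge> 2"
    and "convex_body K" and "constant_width K \<Theta>"
    and "a < b" and "continuous_on {a..b} \<phi>"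
    and "K \<subseteq> convex hull (\<phi> ` {a..b})"
  shows "curve_length \<phi> a b \<ge>
    ereal (2 * (pi - 1) * Gamma (real (DIM('a) + 1) / 2)
           / (sqrt pi * Gamma (real DIM('a) / 2)) * \<Theta>)"
proof -
  have Kne: "K \<noteq> {}" and Kc: "compact K" using assms(2) unfolding convex_body_def by auto
  have cpt: "compact {a..b}" and ne: "{a..b} \<noteq> {}" using assms(4) by auto
  have wid: "\<exists>s1\<in>{a..b}. \<exists>s2\<in>{a..b}. \<Theta> \<le> \<phi> s1 \<bullet> u - \<phi> s2 \<bullet> u" if u1: "norm u = 1" for u
  proof -
    have cont: "continuous_on {a..b} (\<lambda>t. \<phi> t \<bullet> u)" using assms(5) by (intro continuous_intros)
    obtain s1 where s1: "s1 \<in> {a..b}" "\<forall>t\<in>{a..b}. \<phi> t \<bullet> u \<le> \<phi> s1 \<bullet> u"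
      using continuous_attains_sup[OF cpt ne cont] by blast
    obtain s2 where s2: "s2 \<in> {a..b}" "\<forall>t\<in>{a..b}. \<phi> s2 \<bullet> u \<le> \<phi> t \<bullet> u"
      using continuous_attains_inf[OF cpt ne cont] by blast
    have h1: "convex hull (\<phi> ` {a..b}) \<subseteq> {x. u \<bullet> x \<le> \<phi> s1 \<bullet> u}"
    proof (rule hull_minimal)
      show "\<phi> ` {a..b} \<subseteq> {x. u \<bullet> x \<le> \<phi> s1 \<bullet> u}" using s1 by (auto simp: inner_commute)
    qed (rule convex_halfspace_le)
    have h2: "convex hull (\<phi> ` {a..b}) \<subseteq> {x. (- u) \<bullet> x \<le> - (\<phi> s2 \<bullet> u)}"
    proof (rule hull_minimal)
      show "\<phi> ` {a..b} \<subseteq> {x. (- u) \<bullet> x \<le> - (\<phi> s2 \<bullet> u)}" using s2 by (auto simp: inner_commute)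
    qed (rule convex_halfspace_le)
    have sup1: "support_fun K u \<le> \<phi> s1 \<bullet> u" unfolding support_fun_def
    proof (rule cSUP_least[OF Kne])
      fix x assume "x \<in> K"
      then show "x \<bullet> u \<le> \<phi> s1 \<bullet> u" using h1 assms(6) by (auto simp: inner_commute)
    qed
    have sup2: "support_fun K (- u) \<le> - (\<phi> s2 \<bullet> u)" unfolding support_fun_def
    proof (rule cSUP_least[OF Kne])
      fix x assume "x \<in> K"
      then show "x \<bullet> (- u) \<le> - (\<phi> s2 \<bullet> u)" using h2 assms(6) by (auto simp: inner_commute)
    qed
    have "width_fun K u = \<Theta>" using assms(3) u1 unfolding constant_width_def by blast
    then have "\<Theta> \<le> \<phi> s1 \<bullet> u - \<phi> s2 \<bullet> u" using sup1 sup2 unfolding width_fun_def by linarith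
    then show ?thesis using s1(1) s2(1) by blast
  qed
  have theta0: "\<Theta> \<ge> 0"
  proof -
    define u0 :: 'a where "u0 = (SOME i. i \<in> Basis)"
    have u0: "norm u0 = 1" unfolding u0_def using SOME_Basis by auto
    obtain x0 where x0: "x0 \<in> K" using Kne by blast
    have bdd: "bdd_above ((\<lambda>x. x \<bullet> v) ` K)" for v
    proof -
      have "compact ((\<lambda>x. x \<bullet> v) ` K)" by (rule compact_continuous_image[OF _ Kc]) (intro continuous_intros)
      then show ?thesis by (intro bounded_imp_bdd_above compact_imp_bounded)
    qed
    have "x0 \<bullet> u0 \<le> support_fun K u0" unfolding support_fun_def by (rule cSUP_upper[OF x0 bdd])
    moreover have "x0 \<bullet> (- u0) \<le> support_fun K (- u0)" unfolding support_fun_def by (rule cSUP_upper[OF x0 bdd])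
    moreover have "width_fun K u0 = \<Theta>" using assms(3) u0 unfolding constant_width_def by blast
    ultimately show ?thesis unfolding width_fun_def by simp
  qed
  define \<Delta> where "\<Delta> = \<phi> b - \<phi> a"
  define w :: 'a where "w = (if \<Delta> = 0 then (SOME i. i \<in> Basis) else \<Delta>)"
  have w0: "w \<noteq> 0" unfolding w_def using SOME_Basis nonzero_Basis by auto
  have \<Delta>w: "\<Delta> \<bullet> x = 0" if "w \<bullet> x = 0" for x using that unfolding w_def by (auto split: if_splits)
  obtain B where B: "B \<subseteq> {x. w \<bullet> x = 0}" "pairwise orthogonal B" "\<And>x. x \<in> B \<Longrightarrow> norm x = 1"
     "independent B" "card B = dim {x. w \<bullet> x = 0}" "span B = {x. w \<bullet> x = 0}"
    by (rule orthonormal_basis_subspace[OF subspace_hyperplane[of w]]) blast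
  have finB: "finite B" using B(4) by (rule independent_imp_finite)
  have cardB: "card B = DIM('a) - 1" using B(5) dim_hyperplane[OF w0] by simp
  define e where "e = (1 / norm w) *\<^sub>R w"
  have ne1: "norm e = 1" unfolding e_def using w0 by simp
  have we: "w \<bullet> e = norm w" unfolding e_def using w0 by (simp add: power2_norm_eq_inner[symmetric] power2_eq_square)
  have eB: "e \<notin> B" using B(1) we w0 by auto
  have orthB: "orthogonal e x" if "x \<in> B" for x
    using B(1) that unfolding e_def orthogonal_def by (auto simp: inner_commute)
  define C where "C = insert e B"
  have finC: "finite C" unfolding C_def using finB by simp
  have orthC: "pairwise orthogonal C" unfolding C_def pairwise_insert
    using B(2) orthB orthogonal_commute by blast
  have unitC: "norm c = 1" if "c \<in> C" for c using that B(3) ne1 unfolding C_def by auto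
  have cardC: "card C = DIM('a)" unfolding C_def using finB eB cardB assms(1) by simp
  have "\<forall>c\<in>C. \<exists>s1. \<exists>s2. s1 \<in> {a..b} \<and> s2 \<in> {a..b} \<and> \<Theta> \<le> \<phi> s1 \<bullet> c - \<phi> s2 \<bullet> c"
    using wid unitC by blast
  then obtain S1 where "\<forall>c\<in>C. \<exists>s2. S1 c \<in> {a..b} \<and> s2 \<in> {a..b} \<and> \<Theta> \<le> \<phi> (S1 c) \<bullet> c - \<phi> s2 \<bullet> c"
    by (rule bchoice[THEN exE]) blast
  then obtain S2 where S: "\<forall>c\<in>C. S1 c \<in> {a..b} \<and> S2 c \<in> {a..b} \<and> \<Theta> \<le> \<phi> (S1 c) \<bullet> c - \<phi> (S2 c) \<bullet> c"
    by (rule bchoice[THEN exE]) blast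
  define F where "F = {a, b} \<union> S1 ` C \<union> S2 ` C"
  have finF: "finite F" unfolding F_def using finC by simp
  have Fab: "F \<subseteq> {a..b}" unfolding F_def using S assms(4) by auto
  obtain m t where mt: "0 < m" "t 0 = a" "t m = b" "\<forall>i<m. t i < t (Suc i)" "\<forall>s\<in>F. \<exists>i\<le>m. t i = s"
    using partition_exists[OF finF Fab _ _ assms(4)] unfolding F_def by blast
  define P where "P = (\<lambda>c. \<Sum>k<m. \<bar>(\<phi> (t (Suc k)) - \<phi> (t k)) \<bullet> c\<bar>)"
  have Pb: "P c \<ge> 2 * \<Theta> - \<bar>\<Delta> \<bullet> c\<bar> \<and> P c \<ge> \<Theta>" if cC: "c \<in> C" for c
  proof -
    define g where "g = (\<lambda>k. \<phi> (t k) \<bullet> c)"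
    have Pg: "P c = (\<Sum>k<m. \<bar>g (Suc k) - g k\<bar>)" unfolding P_def g_def by (simp add: inner_diff_left)
    obtain i where i: "i \<le> m" "t i = S1 c" using mt(5) cC unfolding F_def by blast
    obtain j where j: "j \<le> m" "t j = S2 c" using mt(5) cC unfolding F_def by blast
    have gij: "\<Theta> \<le> \<bar>g i - g j\<bar>" using S cC i j unfolding g_def by fastforce
    have gm: "g m - g 0 = \<Delta> \<bullet> c" unfolding g_def \<Delta>_def using mt(2,3) by (simp add: inner_diff_left)
    have q: "\<bar>g m - g 0\<bar> = \<bar>\<Delta> \<bullet> c\<bar>" using gm by simp
    show ?thesis
    proof (rule conjI)
      show "2 * \<Theta> - \<bar>\<Delta> \<bullet> c\<bar> \<le> P c" by (rule l2[OF path_bound(1)[OF i(1) j(1), of g] gij q Pg])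
      show "\<Theta> \<le> P c" by (rule l3[OF path_bound(2)[OF i(1) j(1), of g] gij Pg])
    qed
  qed
  have PB: "P c \<ge> 2 * \<Theta>" if "c \<in> B" for c
    using Pb[of c] that \<Delta>w B(1) unfolding C_def by auto
  have PC: "P e \<ge> \<Theta>" using Pb[of e] unfolding C_def by auto
  have sumsq: "(\<Sum>c\<in>C. (P c)^2) \<ge> (4 * real DIM('a) - 3) * \<Theta>^2"
  proof -
    have "(\<Sum>c\<in>C. (P c)^2) = (P e)^2 + (\<Sum>c\<in>B. (P c)^2)" unfolding C_def using finB eB by simp
    moreover have "(P e)^2 \<ge> \<Theta>^2" using PC theta0 by (simp add: power_mono)
    moreover have "(\<Sum>c\<in>B. (P c)^2) \<ge> (\<Sum>c\<in>B. (2 * \<Theta>)^2)"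
      by (intro sum_mono power_mono) (use PB theta0 in auto)
    moreover have "(\<Sum>c\<in>B. (2 * \<Theta>)^2) = real (DIM('a) - 1) * 4 * \<Theta>^2" using cardB by (simp add: power_mult_distrib)
    moreover have "real (DIM('a) - 1) = real DIM('a) - 1" using assms(1) by simp
    ultimately show ?thesis by (simp add: algebra_simps)
  qed
  define poly where "poly = (\<Sum>i=1..m. dist (\<phi> (t (i - 1))) (\<phi> (t i)))"
  have poly_eq: "poly = (\<Sum>k<m. norm (\<phi> (t (Suc k)) - \<phi> (t k)))"
    unfolding poly_def using sum.atLeast1_atMost_eq[of "\<lambda>i. dist (\<phi> (t (i - 1))) (\<phi> (t i))" m]
    by (simp add: dist_norm norm_minus_commute)
  have "sqrt (4 * real DIM('a) - 3) * \<Theta> = sqrt ((4 * real DIM('a) - 3) * \<Theta>^2)"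
    using theta0 by (simp add: real_sqrt_mult)
  also have "\<dots> \<le> sqrt (\<Sum>c\<in>C. (P c)^2)" using sumsq by simp
  also have "\<dots> \<le> poly" unfolding poly_eq P_def by (rule poly_bound[OF finC orthC unitC])
  finally have polyb: "sqrt (4 * real DIM('a) - 3) * \<Theta> \<le> poly" .
  have "ereal poly \<le> curve_length \<phi> a b"
    unfolding curve_length_def poly_def
    by (rule SUP_upper2[of "(m, t)"]) (use mt in auto)
  moreover have "2 * (pi - 1) * Gamma (real (DIM('a) + 1) / 2) / (sqrt pi * Gamma (real DIM('a) / 2)) * \<Theta>
      \<le> sqrt (4 * real DIM('a) - 3) * \<Theta>"
    by (rule mult_right_mono[OF coeff_bound[OF assms(1)] theta0])
  then have "2 * (pi - 1) * Gamma (real (DIM('a) + 1) / 2) / (sqrt pi * Gamma (real DIM('a) / 2)) * \<Theta> \<le> poly"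
    using polyb by linarith
  then have "ereal (2 * (pi - 1) * Gamma (real (DIM('a) + 1) / 2) / (sqrt pi * Gamma (real DIM('a) / 2)) * \<Theta>) \<le> ereal poly"
    by (simp only: ereal_less_eq)
  ultimately show ?thesis by (rule order_trans[rotated])
qed


end
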